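(* Let $P$ be a free $\mathbb{Z}_2$-poset, where $\mathbb{Z}_2=\{+1,-1\}$. The compatibility graph $C_P$ is triangle-free if and only if there are no $x,y\in P$ such that $x\preceq y$ and $x\preceq -y$.
   Context: A $\mathbb{Z}_2$-poset is a poset $(P,\preceq)$ with an action of $\mathbb{Z}_2=\{+1,-1\}$ preserving the order ($x\preceq y\Rightarrow -x\preceq -y$); it is free if $-x\neq x$ for all $x$. The compatibility graph $C_P$ of a $G$-poset $P$ is the simple graph with vertex set $P$ in which distinct $x,y$ are adjacent if there is $g\in G\setminus\{e\}$ such that $x$ and $g\cdot y$ are comparable in $P$; for $G=\mathbb{Z}_2$ this means $x$ and $-y$ are comparable. *)

theory Defs
  imports Main
begin

text \<open>A poset is given by a carrier set P and an order relation le on P.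
A Z2-action is given by the action of the generator -1, an involution neg.\<close>

definition poset_on :: "'a set \<Rightarrow> ('a \<Rightarrow> 'a \<Rightarrow> bool) \<Rightarrow> bool" where
  "poset_on P le \<longleftrightarrow>
     (\<forall>x\<in>P. le x x) \<and>
     (\<forall>x\<in>P. \<forall>y\<in>P. le x y \<and> le y x \<longrightarrow> x = y) \<and>
     (\<forall>x\<in>P. \<forall>y\<in>P. \<forall>z\<in>P. le x y \<and> le y z \<longrightarrow> le x z)"

definition Z2_poset :: "'a set \<Rightarrow> ('a \<Rightarrow> 'a \<Rightarrow> bool) \<Rightarrow> ('a \<Rightarrow> 'a) \<Rightarrow> bool" where
  "Z2_poset P le neg \<longleftrightarrow>
     poset_on P le \<and>
     (\<forall>x\<in>P. neg x \<in> P) \<and>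
     (\<forall>x\<in>P. neg (neg x) = x) \<and>
     (\<forall>x\<in>P. \<forall>y\<in>P. le x y \<longrightarrow> le (neg x) (neg y))"

definition free_Z2_poset :: "'a set \<Rightarrow> ('a \<Rightarrow> 'a \<Rightarrow> bool) \<Rightarrow> ('a \<Rightarrow> 'a) \<Rightarrow> bool" where
  "free_Z2_poset P le neg \<longleftrightarrow> Z2_poset P le neg \<and> (\<forall>x\<in>P. neg x \<noteq> x)"

definition comparable :: "('a \<Rightarrow> 'a \<Rightarrow> bool) \<Rightarrow> 'a \<Rightarrow> 'a \<Rightarrow> bool" where
  "comparable le x y \<longleftrightarrow> le x y \<or> le y x"

text \<open>Edge relation of the compatibility graph C_P (vertex set P): distinct x, y are
adjacent iff x and g y are comparable for some non-identity g, i.e. g = -1.\<close>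
definition compat_adj :: "'a set \<Rightarrow> ('a \<Rightarrow> 'a \<Rightarrow> bool) \<Rightarrow> ('a \<Rightarrow> 'a) \<Rightarrow> 'a \<Rightarrow> 'a \<Rightarrow> bool" where
  "compat_adj P le neg x y \<longleftrightarrow> x \<in> P \<and> y \<in> P \<and> x \<noteq> y \<and> comparable le x (neg y)"

definition triangle_free :: "'a set \<Rightarrow> ('a \<Rightarrow> 'a \<Rightarrow> bool) \<Rightarrow> bool" where
  "triangle_free V E \<longleftrightarrow>
     \<not> (\<exists>x\<in>V. \<exists>y\<in>V. \<exists>z\<in>V. E x y \<and> E y z \<and> E x z)"

end

theory Submission
  imports Defs
begin

theorem lemma19:
  fixes P :: "'a set" and le :: "'a \<Rightarrow> 'a \<Rightarrow> bool" and neg :: "'a \<Rightarrow> 'a"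
  assumes "free_Z2_poset P le neg"
  shows "triangle_free P (compat_adj P le neg) \<longleftrightarrow>
         \<not> (\<exists>x\<in>P. \<exists>y\<in>P. le x y \<and> le x (neg y))"
proof -
  have refl: "\<And>x. x \<in> P \<Longrightarrow> le x x"
    and anti: "\<And>x y. x \<in> P \<Longrightarrow> y \<in> P \<Longrightarrow> le x y \<Longrightarrow> le y x \<Longrightarrow> x = y"
    and trans: "\<And>x y z. x \<in> P \<Longrightarrow> y \<in> P \<Longrightarrow> z \<in> P \<Longrightarrow> le x y \<Longrightarrow> le y z \<Longrightarrow> le x z"
    and nP: "\<And>x. x \<in> P \<Longrightarrow> neg x \<in> P"
    and nn: "\<And>x. x \<in> P \<Longrightarrow> neg (neg x) = x"
    and mono: "\<And>x y. x \<in> P \<Longrightarrow> y \<in> P \<Longrightarrow> le x y \<Longrightarrow> le (neg x) (neg y)"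
    and free: "\<And>x. x \<in> P \<Longrightarrow> neg x \<noteq> x"
    using assms unfolding free_Z2_poset_def Z2_poset_def poset_on_def by blast+
  have notself: "\<not> le x (neg x)" if "x \<in> P" for x
  proof
    assume h: "le x (neg x)"
    then have "le (neg x) x" using mono[OF that nP[OF that] h] nn[OF that] by simp
    then show False using anti[OF that nP[OF that] h] free[OF that] by simp
  qed
  have adj: "compat_adj P le neg u v \<longleftrightarrow> u \<in> P \<and> v \<in> P \<and> u \<noteq> v \<and> (le u (neg v) \<or> le v (neg u))"
    if "u \<in> P" "v \<in> P" for u v
    using that mono nn nP unfolding compat_adj_def comparable_def by metis
  show ?thesis
  proof
    assume tf: "triangle_free P (compat_adj P le neg)"
    show "\<not> (\<exists>x\<in>P. \<exists>y\<in>P. le x y \<and> le x (neg y))"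
    proof
      assume "\<exists>x\<in>P. \<exists>y\<in>P. le x y \<and> le x (neg y)"
      then obtain x y where xy: "x \<in> P" "y \<in> P" "le x y" "le x (neg y)" by blast
      have d1: "x \<noteq> y" using xy notself by metis
      have d2: "x \<noteq> neg y" using xy notself nn nP by metis
      have d3: "y \<noteq> neg y" using free xy by metis
      have "compat_adj P le neg x y" using adj[OF xy(1,2)] d1 xy by simp
      moreover have "compat_adj P le neg y (neg y)" using adj[OF xy(2) nP[OF xy(2)]] d3 xy nP nn refl by simp
      moreover have "compat_adj P le neg x (neg y)" using adj[OF xy(1) nP[OF xy(2)]] d2 xy nP nn by simp
      ultimately show False using tf nP xy unfolding triangle_free_def by blast
    qed
  next
    assume H: "\<not> (\<exists>x\<in>P. \<exists>y\<in>P. le x y \<and> le x (neg y))"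
    have H': "\<not> (le y x \<and> le (neg y) x)" if "x \<in> P" "y \<in> P" for x y
      using H mono[OF that(2,1)] mono[OF nP[OF that(2)] that(1)] nn that nP by metis
    show "triangle_free P (compat_adj P le neg)"
      unfolding triangle_free_def
    proof clarify
      fix a b c assume abc: "a \<in> P" "b \<in> P" "c \<in> P"
        and e: "compat_adj P le neg a b" "compat_adj P le neg b c" "compat_adj P le neg a c"
      have path: False if "u \<in> P" "v \<in> P" "w \<in> P" "le u (neg v)" "le v (neg w)"
          "le u (neg w) \<or> le w (neg u)" for u v w
      proof -
        have "le (neg v) w" using mono[OF that(2) nP[OF that(3)] that(5)] nn that by simp
        then have uw: "le u w" using trans[OF that(1) nP[OF that(2)] that(3) that(4)] by simp
        show False using that(6)
        proof
          assume "le u (neg w)" then show False using H uw that by blast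
        next
          assume "le w (neg u)" then have "le u (neg u)" using trans[OF that(1,3) nP[OF that(1)] uw] by simp
          then show False using notself that by blast
        qed
      qed
      have e1: "le a (neg b) \<or> le b (neg a)" and e2: "le b (neg c) \<or> le c (neg b)"
        and e3: "le a (neg c) \<or> le c (neg a)"
        using e adj abc by auto
      show False
        using e1 e2 e3 path[of a b c] path[of b c a] path[of c a b] path[of a c b] path[of c b a] path[of b a c] abc
        by blast
    qed
  qed
qed

end
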